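(* For all positive integers $n$ and non-negative integers $k$, $$\sum_{l\ge0}\mathcal P^+_n(k,l)\Big|_{x=y=-1}=(-1)^{n+k}\frac{k+1}{n}\binom{2n}{n+k+1}.$$
   Context: Three-step paths consist of up-steps $(1,1)$, level steps $(1,0)$ and down-steps $(1,-1)$. Weights: $w((1,1))=1$, $w((1,0))=x+y$, $w((1,-1))=xy$; a path's weight is the product of its step weights. $\mathcal P^+_n(k,l)$ is the sum of weights of all three-step paths from $(0,k)$ to $(n,l)$ that never run below the $x$-axis; it is a polynomial in $x,y$, here evaluated at $x=y=-1$. Binomial coefficients $\binom ab$ are $0$ if $b>a$. *)

theory Defs
  imports Complex_Main
begin

datatype step = Up | Level | Down

fun step_dy :: "step \<Rightarrow> int" where
  "step_dy Up = 1" | "step_dy Level = 0" | "step_dy Down = -1"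

fun step_w :: "'a::comm_ring_1 \<Rightarrow> 'a \<Rightarrow> step \<Rightarrow> 'a" where
  "step_w x y Up = 1" | "step_w x y Level = x + y" | "step_w x y Down = x * y"

definition nonneg_path :: "nat \<Rightarrow> nat \<Rightarrow> nat \<Rightarrow> step list \<Rightarrow> bool" where
  "nonneg_path n k l s \<longleftrightarrow> length s = n
     \<and> (\<forall>i\<le>n. int k + sum_list (map step_dy (take i s)) \<ge> 0)
     \<and> int k + sum_list (map step_dy s) = int l"

text \<open>P^+_n(k,l), evaluated at given values of x and y.\<close>
definition Pplus :: "'a::comm_ring_1 \<Rightarrow> 'a \<Rightarrow> nat \<Rightarrow> nat \<Rightarrow> nat \<Rightarrow> 'a" where
  "Pplus x y n k l = (\<Sum>s\<in>{s. nonneg_path n k l s}. prod_list (map (step_w x y) s))"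

end

theory Submission
  imports Defs
begin

fun ok :: "int \<Rightarrow> step list \<Rightarrow> bool" where
  "ok h [] = (h \<ge> 0)"
| "ok h (c # s) = (h \<ge> 0 \<and> ok (h + step_dy c) s)"

lemma ok_iff: "(\<forall>i\<le>length s. h + sum_list (map step_dy (take i s)) \<ge> 0) \<longleftrightarrow> ok h s"
proof (induction s arbitrary: h)
  case Nil then show ?case by simp
next
  case (Cons c s)
  have "(\<forall>i\<le>length (c#s). h + sum_list (map step_dy (take i (c#s))) \<ge> 0) \<longleftrightarrow>
        (h \<ge> 0 \<and> (\<forall>j\<le>length s. (h + step_dy c) + sum_list (map step_dy (take j s)) \<ge> 0))"
    (is "?L \<longleftrightarrow> ?R")
  proof
    assume L: ?L
    show ?R
    proof
      show "h \<ge> 0" using L[rule_format, of 0] by simp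
      show "\<forall>j\<le>length s. (h + step_dy c) + sum_list (map step_dy (take j s)) \<ge> 0"
      proof (intro allI impI)
        fix j assume "j \<le> length s"
        then show "(h + step_dy c) + sum_list (map step_dy (take j s)) \<ge> 0"
          using L[rule_format, of "Suc j"] by (simp add: add.assoc)
      qed
    qed
  next
    assume R: ?R
    show ?L
    proof (intro allI impI)
      fix i assume i: "i \<le> length (c#s)"
      show "h + sum_list (map step_dy (take i (c#s))) \<ge> 0"
      proof (cases i)
        case 0 then show ?thesis using R by simp
      next
        case (Suc j) then show ?thesis using R i by (simp add: add.assoc)
      qed
    qed
  qed
  then show ?case using Cons.IH by simp
qed

definition S :: "nat \<Rightarrow> int \<Rightarrow> step list set" where
  "S n h = {s. length s = n \<and> ok h s}"

definition W :: "nat \<Rightarrow> int \<Rightarrow> real" where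
  "W n h = (\<Sum>s\<in>S n h. prod_list (map (step_w (-1) (-1)) s))"

lemma finite_step: "finite (UNIV :: step set)"
proof -
  have "UNIV = {Up, Level, Down}" using step.exhaust by auto
  then show ?thesis by (metis finite.emptyI finite.insertI)
qed

lemma finite_S: "finite (S n h)"
proof -
  have "S n h \<subseteq> {s. set s \<subseteq> UNIV \<and> length s = n}" by (auto simp: S_def)
  moreover have "finite {s. set s \<subseteq> (UNIV::step set) \<and> length s = n}"
    using finite_lists_length_eq[OF finite_step] by simp
  ultimately show ?thesis using finite_subset by blast
qed

lemma ok_nonneg: "ok h s \<Longrightarrow> h \<ge> 0"
  by (cases s) auto

lemma W_neg: "h < 0 \<Longrightarrow> W n h = 0"
proof -
  assume "h < 0"
  have "\<not> ok h s" for s using ok_nonneg[of h s] \<open>h < 0\<close> by linarith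
  then have "S n h = {}" unfolding S_def by blast
  then show ?thesis unfolding W_def by simp
qed

lemma W_0: "h \<ge> 0 \<Longrightarrow> W 0 h = 1"
  unfolding W_def S_def by (subgoal_tac "{s. length s = 0 \<and> ok h s} = {[]}") auto

lemma S_Suc: "h \<ge> 0 \<Longrightarrow> S (Suc n) h = ((#) Up ` S n (h+1) \<union> (#) Level ` S n h) \<union> (#) Down ` S n (h-1)"
proof
  assume "h \<ge> 0"
  show "S (Suc n) h \<subseteq> ((#) Up ` S n (h+1) \<union> (#) Level ` S n h) \<union> (#) Down ` S n (h-1)"
  proof
    fix s assume "s \<in> S (Suc n) h"
    then obtain c t where s: "s = c # t" "length t = n" "ok (h + step_dy c) t"
      unfolding S_def by (cases s) auto
    then show "s \<in> ((#) Up ` S n (h+1) \<union> (#) Level ` S n h) \<union> (#) Down ` S n (h-1)"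
      by (cases c) (auto simp: S_def)
  qed
next
  assume "h \<ge> 0"
  then show "((#) Up ` S n (h+1) \<union> (#) Level ` S n h) \<union> (#) Down ` S n (h-1) \<subseteq> S (Suc n) h"
    by (auto simp: S_def)
qed

lemma W_Suc: "h \<ge> 0 \<Longrightarrow> W (Suc n) h = W n (h+1) - 2 * W n h + W n (h-1)"
proof -
  assume h: "h \<ge> 0"
  let ?f = "\<lambda>s. prod_list (map (step_w (-1::real) (-1)) s)"
  have img: "sum ?f ((#) c ` S n g) = step_w (-1) (-1) c * W n g" for c g
    by (simp add: sum.reindex W_def sum_distrib_left)
  have "W (Suc n) h = sum ?f (((#) Up ` S n (h+1) \<union> (#) Level ` S n h) \<union> (#) Down ` S n (h-1))"
    unfolding W_def S_Suc[OF h] ..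
  also have "\<dots> = sum ?f ((#) Up ` S n (h+1) \<union> (#) Level ` S n h) + sum ?f ((#) Down ` S n (h-1))"
    by (rule sum.union_disjoint) (auto simp: finite_S)
  also have "sum ?f ((#) Up ` S n (h+1) \<union> (#) Level ` S n h) = sum ?f ((#) Up ` S n (h+1)) + sum ?f ((#) Level ` S n h)"
    by (rule sum.union_disjoint) (auto simp: finite_S)
  finally show ?thesis by (simp add: img)
qed

lemma W_closed: "n \<ge> 1 \<Longrightarrow> W n (int h) = (-1)^(n+h) * (real ((2*n-1) choose (n+h)) - real ((2*n-1) choose (n+h+1)))"
proof (induction n arbitrary: h rule: nat_induct_at_least)
  case base
  show ?case
  proof (cases h)
    case 0
    then show ?thesis by (simp add: W_Suc W_0 W_neg)
  next
    case (Suc j)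
    then show ?thesis by (simp add: W_Suc W_0 W_neg)
  qed
next
  case (Suc n)
  define m where "m = 2*n - 1"
  have m2: "2 * Suc n - 1 = Suc (Suc m)" using Suc.hyps by (simp add: m_def)
  have pas: "(Suc (Suc m) choose Suc j) = (m choose (j - 1)) + 2 * (m choose j) + (m choose Suc j)" if j1: "j \<ge> 1" for j
  proof -
    obtain i where i: "j = Suc i" using j1 by (cases j) auto
    show ?thesis unfolding i by simp
  qed
  have i1: "int h + 1 = int (Suc h)" by simp
  have e1: "W n (int h + 1) = (-1)^(n+h+1) * (real (m choose (n+h+1)) - real (m choose (n+h+2)))"
    unfolding i1 using Suc.IH[of "Suc h"] by (simp add: m_def)
  have e2: "W n (int h) = (-1)^(n+h) * (real (m choose (n+h)) - real (m choose (n+h+1)))"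
    using Suc.IH[of h] by (simp add: m_def)
  have e3: "W n (int h - 1) = (-1)^(n+h+1) * (real (m choose (n+h-1)) - real (m choose (n+h)))"
  proof (cases h)
    case 0
    have "m choose (n - 1) = m choose n"
    proof -
      have "m = n + (n - 1)" using Suc.hyps by (simp add: m_def)
      then show ?thesis by (metis binomial_symmetric le_add2 add_diff_cancel_right')
    qed
    then show ?thesis using 0 by (simp add: W_neg)
  next
    case (Suc j)
    then have "int h - 1 = int j" by simp
    then show ?thesis using Suc.IH[of j] Suc by (simp add: m_def)
  qed
  have p1: "real (Suc (Suc m) choose Suc (n+h)) = real (m choose (n+h-1)) + 2 * real (m choose (n+h)) + real (m choose (n+h+1))"
    using pas[of "n+h"] Suc.hyps by simp
  have p2: "real (Suc (Suc m) choose Suc (n+h+1)) = real (m choose (n+h)) + 2 * real (m choose (n+h+1)) + real (m choose (n+h+2))"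
    using pas[of "n+h+1"] by simp
  have "W (Suc n) (int h) = W n (int h + 1) - 2 * W n (int h) + W n (int h - 1)"
    by (simp add: W_Suc)
  also have "\<dots> = (-1)^(Suc n + h) * (real (Suc (Suc m) choose Suc (n+h)) - real (Suc (Suc m) choose Suc (n+h+1)))"
    unfolding e1 e2 e3 p1 p2 by (simp add: algebra_simps)
  finally show ?case unfolding m2 by simp
qed

lemma ballot: "n \<ge> 1 \<Longrightarrow> real (k + 1) / real n * real ((2 * n) choose (n + k + 1))
   = real ((2*n-1) choose (n+k)) - real ((2*n-1) choose (n+k+1))"
proof -
  assume n: "n \<ge> 1"
  define m where "m = 2*n - 1"
  have N: "2*n = Suc m" using n by (simp add: m_def)
  have a: "Suc (n+k) * (Suc m choose Suc (n+k)) = Suc m * (m choose (n+k))"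
    using binomial_absorption[of "n+k" "Suc m"] by simp
  have b: "(Suc m - (n+k+1)) * (Suc m choose (n+k+1)) = Suc m * (m choose (n+k+1))"
    using binomial_absorb_comp[of "Suc m" "n+k+1"] by simp
  show ?thesis
  proof (cases "n + k + 1 \<le> Suc m")
    case True
    have a': "real (Suc (n+k)) * real (Suc m choose Suc (n+k)) = real (Suc m) * real (m choose (n+k))"
      using a by (metis of_nat_mult)
    have b': "real (Suc m - (n+k+1)) * real (Suc m choose (n+k+1)) = real (Suc m) * real (m choose (n+k+1))"
      using b by (metis of_nat_mult)
    have c: "real (Suc m - (n+k+1)) = real (Suc m) - real (n+k+1)" using True by simp
    have "real (Suc m) * (real (m choose (n+k)) - real (m choose (n+k+1)))
        = (real (Suc (n+k)) - (real (Suc m) - real (n+k+1))) * real (Suc m choose (n+k+1))"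
      using a' b' c by (simp add: algebra_simps)
    also have "\<dots> = real (Suc m) * (real (k + 1) / real n * real (Suc m choose (n + k + 1)))"
    proof -
      have e: "real (Suc (n+k)) - (real (Suc m) - real (n+k+1)) = 2 * (real k + 1)"
        using N by (simp add: of_nat_mult[symmetric])
      have f: "real (Suc m) = 2 * real n" using N by (metis of_nat_mult of_nat_numeral)
      have g: "real n > 0" using n by simp
      show ?thesis unfolding e f using g by (simp add: field_simps)
    qed
    finally have h: "real (Suc m) * (real (m choose (n+k)) - real (m choose (n+k+1)))
        = real (Suc m) * (real (k + 1) / real n * real (Suc m choose (n + k + 1)))" .
    have nz: "real (Suc m) \<noteq> 0" by (simp del: of_nat_Suc)
    have "real (m choose (n+k)) - real (m choose (n+k+1)) = real (k + 1) / real n * real (Suc m choose (n + k + 1))"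
      using h nz by (metis mult_cancel_left)
    then show ?thesis unfolding m_def[symmetric] unfolding N by (rule sym)
  next
    case False
    then have z: "Suc m choose (n+k+1) = 0" "m choose (n+k) = 0" "m choose (n+k+1) = 0" by simp_all
    show ?thesis unfolding m_def[symmetric] unfolding N z by simp
  qed
qed

lemma sum_eq_W: "(\<Sum>l\<in>{0..n+k}. Pplus (-1::real) (-1) n k l) = W n (int k)"
proof -
  let ?f = "\<lambda>s. prod_list (map (step_w (-1::real) (-1)) s)"
  have P: "Pplus (-1::real) (-1) n k l = sum ?f {s\<in>S n (int k). int k + sum_list (map step_dy s) = int l}" for l
    unfolding Pplus_def nonneg_path_def S_def using ok_iff
    by (intro sum.cong) auto
  have "W n (int k) = (\<Sum>l\<in>{0..n+k}. sum ?f {s\<in>S n (int k). nat (int k + sum_list (map step_dy s)) = l})"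
  proof -
    have r: "nat (int k + sum_list (map step_dy s)) \<in> {0..n+k}" if "s \<in> S n (int k)" for s
    proof -
      have "sum_list (map step_dy s) \<le> int (length s)"
      proof (induction s)
        case (Cons c s) then show ?case by (cases c) auto
      qed simp
      then show ?thesis using that ok_iff[of s "int k"] by (auto simp: S_def)
    qed
    show ?thesis unfolding W_def
      by (rule sum.group[symmetric]) (use r in \<open>auto simp: finite_S\<close>)
  qed
  also have "\<dots> = (\<Sum>l\<in>{0..n+k}. Pplus (-1::real) (-1) n k l)"
  proof (rule sum.cong[OF refl])
    fix l
    have "{s\<in>S n (int k). nat (int k + sum_list (map step_dy s)) = l}
        = {s\<in>S n (int k). int k + sum_list (map step_dy s) = int l}"
    proof -
      have "int k + sum_list (map step_dy s) \<ge> 0" if "s \<in> S n (int k)" for s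
        using that ok_iff[of s "int k"] by (auto simp: S_def)
      then show ?thesis by auto
    qed
    then show "sum ?f {s\<in>S n (int k). nat (int k + sum_list (map step_dy s)) = l} = Pplus (-1::real) (-1) n k l"
      by (simp add: P)
  qed
  finally show ?thesis by simp
qed

theorem mainTheorem17:
  fixes n k :: nat
  assumes "n \<ge> 1"
  shows "(\<Sum>l\<in>{0..n+k}. Pplus (-1::real) (-1) n k l)
         = (-1) ^ (n + k) * (real (k + 1) / real n) * real ((2 * n) choose (n + k + 1))"
proof -
  have "(\<Sum>l\<in>{0..n+k}. Pplus (-1::real) (-1) n k l) = W n (int k)" by (rule sum_eq_W)
  also have "\<dots> = (-1)^(n+k) * (real ((2*n-1) choose (n+k)) - real ((2*n-1) choose (n+k+1)))"
    by (rule W_closed[OF assms])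
  also have "\<dots> = (-1)^(n+k) * (real (k + 1) / real n * real ((2 * n) choose (n + k + 1)))"
    by (simp only: ballot[OF assms])
  finally show ?thesis by (simp only: mult.assoc)
qed

end
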